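(* Consider a particle in the plane with dimensionless canonical observables $x,y,p_x,p_y$ ($[x,p_x]=[y,p_y]=i$, other commutators zero) and the Hamiltonian $H(t)=\tfrac12\big(p_x^2+p_y^2+\beta(t)^2(x^2+y^2)\big)-\beta(t)M_z$, with $M_z=xp_y-yp_x$ and $\beta(t)=\beta_0+\beta_1\sin(2\pi t)$, $\beta_0,\beta_1\in\mathbb R$. Let $b(t)$ be the real $2\times2$ matrix solving $\frac{db}{dt}=\begin{pmatrix}0&1\\-\beta(t)^2&0\end{pmatrix}b(t)$, $b(0)=\mathbb 1$, and let $r(t)$ be the $4\times4$ matrix rotating simultaneously the pairs $(x,y)$ and $(p_x,p_y)$ by the angle $\gamma(t)=\int_0^t\beta(t')dt'$ about the $z$-axis, so that the evolution matrix $u(t)$ defined by $(x(t),y(t),p_x(t),p_y(t))^{T}=u(t)\,(x,y,p_x,p_y)^{T}$ (classical or Heisenberg variables) equals $u(t)=r(t)\,\mathrm{diag}(b(t),b(t))$ in the basis $(x,p_x,y,p_y)$ for each $b$-block. Suppose that for some positive integer $n$ one has $b(n)=\mathbb 1$, and that $\gamma(n)=2\pi k/m$ with $k,m$ positive integers such that $k/m\notin\mathbb Z$. Then $u(mn)=\mathbb 1$ (the full evolution closes into a loop at $t=mn$), and the loop center $\mathbf X=\frac{1}{mn}\int_0^{mn}(x(t),y(t))\,dt$ vanishes identically, both for the classical trajectories and for the quantum Heisenberg observables.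
   Context: Units: time is measured in periods of the field ($T=1$), $\hbar=1$, particle mass $1$; $\beta$ is the dimensionless magnetic field amplitude. The Hamiltonian is quadratic, so classical and quantum (Heisenberg) trajectories are given by the same matrix $u(t)$. *)

theory Defs
  imports "HOL-Analysis.Analysis"
begin

definition beta :: "real \<Rightarrow> real \<Rightarrow> real \<Rightarrow> real" where
  "beta \<beta>0 \<beta>1 t = \<beta>0 + \<beta>1 * sin (2 * pi * t)"

definition gamma :: "real \<Rightarrow> real \<Rightarrow> real \<Rightarrow> real" where
  "gamma \<beta>0 \<beta>1 t = integral {0..t} (beta \<beta>0 \<beta>1)"

definition Amat :: "real \<Rightarrow> real \<Rightarrow> real \<Rightarrow> real^2^2" where
  "Amat \<beta>0 \<beta>1 t = vector [vector [0, 1], vector [- ((beta \<beta>0 \<beta>1 t) ^ 2), 0]]"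

definition solves_b :: "real \<Rightarrow> real \<Rightarrow> (real \<Rightarrow> real^2^2) \<Rightarrow> bool" where
  "solves_b \<beta>0 \<beta>1 b \<longleftrightarrow> b 0 = mat 1 \<and>
     (\<forall>t. (b has_vector_derivative (Amat \<beta>0 \<beta>1 t ** b t)) (at t))"

text \<open>Evolution matrix u(t) = r(t) diag(b(t), b(t)) in the phase-space basis
  (x, y, p_x, p_y) (indices 1,2,3,4); r(t) rotates (x,y) and (p_x,p_y) by gamma(t)
  with the orientation generated by -beta M_z.  (x(t),y(t),p_x(t),p_y(t)) = u(t) (x,y,p_x,p_y).\<close>
definition u :: "real \<Rightarrow> real \<Rightarrow> (real \<Rightarrow> real^2^2) \<Rightarrow> real \<Rightarrow> real^4^4" where
  "u \<beta>0 \<beta>1 b t =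
    (let c = cos (gamma \<beta>0 \<beta>1 t); s = sin (gamma \<beta>0 \<beta>1 t);
         b11 = b t $ 1 $ 1; b12 = b t $ 1 $ 2; b21 = b t $ 2 $ 1; b22 = b t $ 2 $ 2
     in vector [
       vector [  c * b11, s * b11,   c * b12, s * b12],
       vector [- s * b11, c * b11, - s * b12, c * b12],
       vector [  c * b21, s * b21,   c * b22, s * b22],
       vector [- s * b21, c * b21, - s * b22, c * b22]])"

text \<open>Loop center X = (1/T) int_0^T (x(t), y(t)) dt, expressed by its coefficient
  matrix with respect to the initial variables (x,y,p_x,p_y): row 1 gives X_x, row 2 X_y.
  This covers classical trajectories and Heisenberg operators alike.\<close>
definition loop_center :: "real \<Rightarrow> real \<Rightarrow> (real \<Rightarrow> real^2^2) \<Rightarrow> real \<Rightarrow> real^4^2" where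
  "loop_center \<beta>0 \<beta>1 b T =
     (1 / T) *\<^sub>R integral {0..T} (\<lambda>t. vector [u \<beta>0 \<beta>1 b t $ 1, u \<beta>0 \<beta>1 b t $ 2])"

end

theory Submission
  imports Defs
begin

lemma comp_deriv:
  assumes "solves_b \<beta>0 \<beta>1 b"
  shows "((\<lambda>t. b t $ i $ j) has_real_derivative (Amat \<beta>0 \<beta>1 t ** b t) $ i $ j) (at t)"
proof -
  have d: "(b has_vector_derivative (Amat \<beta>0 \<beta>1 t ** b t)) (at t)"
    using assms unfolding solves_b_def by blast
  have bl: "bounded_linear (\<lambda>x::real^2^2. x $ i $ j)"
    using bounded_linear_compose[OF bounded_linear_vec_nth[of j] bounded_linear_vec_nth[of i]] by simp
  show ?thesis
    using bounded_linear.has_vector_derivative[OF bl d]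
    by (simp add: has_real_derivative_iff_has_vector_derivative)
qed

lemma Amat_entries:
  "(Amat \<beta>0 \<beta>1 t ** B) $ 1 $ 1 = B $ 2 $ 1"
  "(Amat \<beta>0 \<beta>1 t ** B) $ 1 $ 2 = B $ 2 $ 2"
  "(Amat \<beta>0 \<beta>1 t ** B) $ 2 $ 1 = - ((beta \<beta>0 \<beta>1 t)^2) * (B $ 1 $ 1)"
  "(Amat \<beta>0 \<beta>1 t ** B) $ 2 $ 2 = - ((beta \<beta>0 \<beta>1 t)^2) * (B $ 1 $ 2)"
  by (simp_all add: Amat_def matrix_matrix_mult_def sum_2)

lemma beta_shift: "beta \<beta>0 \<beta>1 (t + real n) = beta \<beta>0 \<beta>1 t"
proof -
  have "sin (2 * pi * (t + real n)) = sin (2 * pi * t + 2 * real n * pi)"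
    by (simp add: algebra_simps)
  also have "\<dots> = sin (2 * pi * t)" by (simp add: sin_add sin_2npi cos_2npi)
  finally show ?thesis by (simp add: beta_def)
qed


lemma const_of_deriv0:
  fixes f :: "real \<Rightarrow> real"
  assumes "\<And>t. (f has_real_derivative 0) (at t)"
  shows "f t = f 0"
  using DERIV_isconst_all assms by blast

lemma wronsk_const:
  fixes p11 p12 p21 p22 q11 q12 q21 q22 B :: "real \<Rightarrow> real"
  assumes p11: "\<And>t. (p11 has_real_derivative p21 t) (at t)"
    and p12: "\<And>t. (p12 has_real_derivative p22 t) (at t)"
    and p21: "\<And>t. (p21 has_real_derivative - ((B t)^2) * p11 t) (at t)"
    and p22: "\<And>t. (p22 has_real_derivative - ((B t)^2) * p12 t) (at t)"
    and q11: "\<And>t. (q11 has_real_derivative q21 t) (at t)"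
    and q12: "\<And>t. (q12 has_real_derivative q22 t) (at t)"
    and q21: "\<And>t. (q21 has_real_derivative - ((B t)^2) * q11 t) (at t)"
    and q22: "\<And>t. (q22 has_real_derivative - ((B t)^2) * q12 t) (at t)"
  shows "p22 t * q11 t - p12 t * q21 t = p22 0 * q11 0 - p12 0 * q21 0"
    and "p22 t * q12 t - p12 t * q22 t = p22 0 * q12 0 - p12 0 * q22 0"
    and "p11 t * q21 t - p21 t * q11 t = p11 0 * q21 0 - p21 0 * q11 0"
    and "p11 t * q22 t - p21 t * q12 t = p11 0 * q22 0 - p21 0 * q12 0"
    and "p11 t * p22 t - p12 t * p21 t = p11 0 * p22 0 - p12 0 * p21 0"
proof -
  show "p22 t * q11 t - p12 t * q21 t = p22 0 * q11 0 - p12 0 * q21 0"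
    by (rule const_of_deriv0[where f="\<lambda>t. p22 t * q11 t - p12 t * q21 t"],
        rule DERIV_cong, rule DERIV_diff[OF DERIV_mult[OF p22 q11] DERIV_mult[OF p12 q21]],
        simp add: algebra_simps)
  show "p22 t * q12 t - p12 t * q22 t = p22 0 * q12 0 - p12 0 * q22 0"
    by (rule const_of_deriv0[where f="\<lambda>t. p22 t * q12 t - p12 t * q22 t"],
        rule DERIV_cong, rule DERIV_diff[OF DERIV_mult[OF p22 q12] DERIV_mult[OF p12 q22]],
        simp add: algebra_simps)
  show "p11 t * q21 t - p21 t * q11 t = p11 0 * q21 0 - p21 0 * q11 0"
    by (rule const_of_deriv0[where f="\<lambda>t. p11 t * q21 t - p21 t * q11 t"],
        rule DERIV_cong, rule DERIV_diff[OF DERIV_mult[OF p11 q21] DERIV_mult[OF p21 q11]],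
        simp add: algebra_simps)
  show "p11 t * q22 t - p21 t * q12 t = p11 0 * q22 0 - p21 0 * q12 0"
    by (rule const_of_deriv0[where f="\<lambda>t. p11 t * q22 t - p21 t * q12 t"],
        rule DERIV_cong, rule DERIV_diff[OF DERIV_mult[OF p11 q22] DERIV_mult[OF p21 q12]],
        simp add: algebra_simps)
  show "p11 t * p22 t - p12 t * p21 t = p11 0 * p22 0 - p12 0 * p21 0"
    by (rule const_of_deriv0[where f="\<lambda>t. p11 t * p22 t - p12 t * p21 t"],
        rule DERIV_cong, rule DERIV_diff[OF DERIV_mult[OF p11 p22] DERIV_mult[OF p12 p21]],
        simp add: algebra_simps)
qed

lemma b_periodic:
  assumes sb: "solves_b \<beta>0 \<beta>1 b" and bn: "b (real n) = mat 1"
  shows "b (t + real n) = b t"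
proof -
  define B where "B = beta \<beta>0 \<beta>1"
  have d: "\<And>i j t. ((\<lambda>t. b t $ i $ j) has_real_derivative (Amat \<beta>0 \<beta>1 t ** b t) $ i $ j) (at t)"
    using comp_deriv[OF sb] .
  have d11: "\<And>t. ((\<lambda>t. b t $ 1 $ 1) has_real_derivative b t $ 2 $ 1) (at t)"
    using d[of 1 1] by (simp add: Amat_entries)
  have d12: "\<And>t. ((\<lambda>t. b t $ 1 $ 2) has_real_derivative b t $ 2 $ 2) (at t)"
    using d[of 1 2] by (simp add: Amat_entries)
  have d21: "\<And>t. ((\<lambda>t. b t $ 2 $ 1) has_real_derivative - ((B t)^2) * (b t $ 1 $ 1)) (at t)"
    using d[of 2 1] by (simp add: Amat_entries B_def)
  have d22: "\<And>t. ((\<lambda>t. b t $ 2 $ 2) has_real_derivative - ((B t)^2) * (b t $ 1 $ 2)) (at t)"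
    using d[of 2 2] by (simp add: Amat_entries B_def)
  have Bs: "\<And>t. B (t + real n) = B t" by (simp add: B_def beta_shift)
  have e11: "((\<lambda>t. b (t + real n) $ 1 $ 1) has_real_derivative b (t + real n) $ 2 $ 1) (at t)" for t
    using d11[of "t + real n"] DERIV_shift[of "\<lambda>t. b t $ 1 $ 1" _ t "real n"] by simp
  have e12: "((\<lambda>t. b (t + real n) $ 1 $ 2) has_real_derivative b (t + real n) $ 2 $ 2) (at t)" for t
    using d12[of "t + real n"] DERIV_shift[of "\<lambda>t. b t $ 1 $ 2" _ t "real n"] by simp
  have e21: "((\<lambda>t. b (t + real n) $ 2 $ 1) has_real_derivative - ((B t)^2) * (b (t + real n) $ 1 $ 1)) (at t)" for t
    using d21[of "t + real n"] DERIV_shift[of "\<lambda>t. b t $ 2 $ 1" _ t "real n"] Bs[of t] by simp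
  have e22: "((\<lambda>t. b (t + real n) $ 2 $ 2) has_real_derivative - ((B t)^2) * (b (t + real n) $ 1 $ 2)) (at t)" for t
    using d22[of "t + real n"] DERIV_shift[of "\<lambda>t. b t $ 2 $ 2" _ t "real n"] Bs[of t] by simp
  note W = wronsk_const[OF d11 d12 d21 d22 e11 e12 e21 e22, of t]
  have b0: "b 0 = mat 1" using sb by (simp add: solves_b_def)
  have b0e: "b 0 $ 1 $ 1 = 1" "b 0 $ 1 $ 2 = 0" "b 0 $ 2 $ 1 = 0" "b 0 $ 2 $ 2 = 1"
    using b0 by (simp_all add: mat_def)
  have bne: "b (real n) $ 1 $ 1 = 1" "b (real n) $ 1 $ 2 = 0" "b (real n) $ 2 $ 1 = 0" "b (real n) $ 2 $ 2 = 1"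
    using bn by (simp_all add: mat_def)
  note W' = W[unfolded b0e, simplified, unfolded bne]
  let ?p11 = "b t $ 1 $ 1" and ?p12 = "b t $ 1 $ 2" and ?p21 = "b t $ 2 $ 1" and ?p22 = "b t $ 2 $ 2"
  let ?q11 = "b (t + real n) $ 1 $ 1" and ?q12 = "b (t + real n) $ 1 $ 2"
  let ?q21 = "b (t + real n) $ 2 $ 1" and ?q22 = "b (t + real n) $ 2 $ 2"
  have w1: "?p22 * ?q11 - ?p12 * ?q21 = 1" and w2: "?p22 * ?q12 - ?p12 * ?q22 = 0"
    and w3: "?p11 * ?q21 - ?p21 * ?q11 = 0" and w4: "?p11 * ?q22 - ?p21 * ?q12 = 1"
    and w5: "?p11 * ?p22 - ?p12 * ?p21 = 1"
    using W' by simp_all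
  have "?q11 = ?q11 * (?p11 * ?p22 - ?p12 * ?p21)" using w5 by simp
  also have "\<dots> = ?p11 * (?p22 * ?q11 - ?p12 * ?q21) + ?p12 * (?p11 * ?q21 - ?p21 * ?q11)"
    by (simp add: algebra_simps)
  finally have r11: "?q11 = ?p11" using w1 w3 by simp
  have "?q12 = ?q12 * (?p11 * ?p22 - ?p12 * ?p21)" using w5 by simp
  also have "\<dots> = ?p11 * (?p22 * ?q12 - ?p12 * ?q22) + ?p12 * (?p11 * ?q22 - ?p21 * ?q12)"
    by (simp add: algebra_simps)
  finally have r12: "?q12 = ?p12" using w2 w4 by simp
  have "?q21 = ?q21 * (?p11 * ?p22 - ?p12 * ?p21)" using w5 by simp
  also have "\<dots> = ?p21 * (?p22 * ?q11 - ?p12 * ?q21) + ?p22 * (?p11 * ?q21 - ?p21 * ?q11)"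
    by (simp add: algebra_simps)
  finally have r21: "?q21 = ?p21" using w1 w3 by simp
  have "?q22 = ?q22 * (?p11 * ?p22 - ?p12 * ?p21)" using w5 by simp
  also have "\<dots> = ?p21 * (?p22 * ?q12 - ?p12 * ?q22) + ?p22 * (?p11 * ?q22 - ?p21 * ?q12)"
    by (simp add: algebra_simps)
  finally have r22: "?q22 = ?p22" using w2 w4 by simp
  show ?thesis using r11 r12 r21 r22 by (simp add: vec_eq_iff forall_2)
qed

lemma trig_sum:
  fixes k m :: nat and a :: real
  assumes m: "m > 0" and nz: "real k / real m \<notin> \<int>"
  defines "\<theta> \<equiv> 2 * pi * real k / real m"
  shows "(\<Sum>j<m. cos (a + real j * \<theta>)) = 0 \<and> (\<Sum>j<m. sin (a + real j * \<theta>)) = 0"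
proof -
  have z1: "cis \<theta> \<noteq> 1"
  proof
    assume "cis \<theta> = 1"
    then have "exp (\<i> * complex_of_real \<theta>) = 1" by (simp add: cis_conv_exp)
    then obtain q :: int where "\<theta> = real_of_int (2 * q) * pi" by (auto simp: exp_eq_1)
    then have "real k / real m = of_int q" using m by (simp add: \<theta>_def field_simps)
    then show False using nz by (metis Ints_of_int)
  qed
  have zm: "cis \<theta> ^ m = 1"
  proof -
    have "real m * \<theta> = 2 * pi * real k" using m by (simp add: \<theta>_def)
    then have "cis \<theta> ^ m = cis (2 * pi * real k)" using Complex.DeMoivre[of \<theta> m] by metis
    also have "\<dots> = 1" by (rule cis_multiple_2pi) simp
    finally show ?thesis .
  qed
  have gs: "(\<Sum>j<m. cis \<theta> ^ j) = 0"
    using z1 zm by (simp add: sum_gp_strict)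
  have "(\<Sum>j<m. cis (a + real j * \<theta>)) = cis a * (\<Sum>j<m. cis \<theta> ^ j)"
    by (simp add: sum_distrib_left Complex.DeMoivre cis_mult)
  also have "\<dots> = 0" using gs by simp
  finally have S: "(\<Sum>j<m. cis (a + real j * \<theta>)) = 0" .
  have "(\<Sum>j<m. cos (a + real j * \<theta>)) = Re (\<Sum>j<m. cis (a + real j * \<theta>))"
    by (simp add: Re_sum)
  moreover have "(\<Sum>j<m. sin (a + real j * \<theta>)) = Im (\<Sum>j<m. cis (a + real j * \<theta>))"
    by (simp add: Im_sum)
  ultimately show ?thesis using S by simp
qed
definition G :: "real \<Rightarrow> real \<Rightarrow> real \<Rightarrow> real" where
  "G \<beta>0 \<beta>1 t = \<beta>0 * t + \<beta>1 * (1 - cos (2 * pi * t)) / (2 * pi)"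

lemma gamma_formula:
  assumes "0 \<le> t" shows "gamma \<beta>0 \<beta>1 t = G \<beta>0 \<beta>1 t"
proof -
  define F where "F x = \<beta>0 * x - \<beta>1 * cos (2 * pi * x) / (2 * pi)" for x
  have "(F has_real_derivative beta \<beta>0 \<beta>1 x) (at x within {0..t})" for x
    unfolding F_def beta_def
    by (auto intro!: derivative_eq_intros)
  then have "(beta \<beta>0 \<beta>1 has_integral F t - F 0) {0..t}"
    using assms by (intro fundamental_theorem_of_calculus)
      (auto simp: has_real_derivative_iff_has_vector_derivative)
  then have "gamma \<beta>0 \<beta>1 t = F t - F 0" by (simp add: gamma_def integral_unique)
  then show ?thesis by (simp add: F_def G_def field_simps)
qed

lemma G_shift: "G \<beta>0 \<beta>1 (t + real N) = G \<beta>0 \<beta>1 t + \<beta>0 * real N"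
proof -
  have "cos (2 * pi * (t + real N)) = cos (2 * pi * t + 2 * real N * pi)"
    by (simp add: algebra_simps)
  also have "\<dots> = cos (2 * pi * t)" by (simp add: cos_add sin_2npi cos_2npi)
  finally show ?thesis by (simp add: G_def algebra_simps)
qed

lemma cont_G: "continuous_on S (G \<beta>0 \<beta>1)"
  unfolding G_def by (intro continuous_intros) auto
lemma vector_4 [simp]:
  "(vector[a,b,c,d] :: 'a::zero^4) $ 1 = a"
  "(vector[a,b,c,d] :: 'a::zero^4) $ 2 = b"
  "(vector[a,b,c,d] :: 'a::zero^4) $ 3 = c"
  "(vector[a,b,c,d] :: 'a::zero^4) $ 4 = d"
  unfolding vector_def by simp_all

definition gt :: "real \<Rightarrow> real \<Rightarrow> (real \<Rightarrow> real^2^2) \<Rightarrow> real \<Rightarrow> real^4^2" where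
  "gt \<beta>0 \<beta>1 b t =
    (let c = cos (G \<beta>0 \<beta>1 t); s = sin (G \<beta>0 \<beta>1 t);
         b11 = b t $ 1 $ 1; b12 = b t $ 1 $ 2
     in vector [vector [  c * b11, s * b11,   c * b12, s * b12],
                vector [- s * b11, c * b11, - s * b12, c * b12]])"

definition V1 :: "real^2^2 \<Rightarrow> real^4^2" where
  "V1 B = vector [vector [B $ 1 $ 1, 0, B $ 1 $ 2, 0], vector [0, B $ 1 $ 1, 0, B $ 1 $ 2]]"
definition V2 :: "real^2^2 \<Rightarrow> real^4^2" where
  "V2 B = vector [vector [0, B $ 1 $ 1, 0, B $ 1 $ 2], vector [- (B $ 1 $ 1), 0, - (B $ 1 $ 2), 0]]"

lemma gt_eq: "0 \<le> t \<Longrightarrow> vector [u \<beta>0 \<beta>1 b t $ 1, u \<beta>0 \<beta>1 b t $ 2] = gt \<beta>0 \<beta>1 b t"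
  by (simp add: u_def gt_def Let_def gamma_formula)

lemma gt_decomp: "gt \<beta>0 \<beta>1 b t = cos (G \<beta>0 \<beta>1 t) *\<^sub>R V1 (b t) + sin (G \<beta>0 \<beta>1 t) *\<^sub>R V2 (b t)"
  by (simp add: gt_def V1_def V2_def Let_def vec_eq_iff forall_2 forall_4)

lemma cont_vec:
  fixes f :: "real \<Rightarrow> 'a::topological_space^'n"
  assumes "\<And>i. continuous_on S (\<lambda>x. f x $ i)"
  shows "continuous_on S f"
  using continuous_on_vec_lambda[of S "\<lambda>i x. f x $ i", OF assms] by simp

lemma cont_gt:
  assumes "solves_b \<beta>0 \<beta>1 b"
  shows "continuous_on S (gt \<beta>0 \<beta>1 b)"
proof -
  have cb: "continuous_on S (\<lambda>t. b t $ i $ j)" for i j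
  proof -
    have "\<And>t. isCont b t"
      using assms unfolding solves_b_def
      by (meson has_vector_derivative_continuous)
    then have "continuous_on S b" by (simp add: continuous_at_imp_continuous_on)
    then show ?thesis by (intro continuous_intros)
  qed
  have cG: "continuous_on S (\<lambda>t. G \<beta>0 \<beta>1 t)" by (rule cont_G)
  show ?thesis
  proof (rule cont_vec, rule cont_vec)
    fix i :: 2 and l :: 4
    show "continuous_on S (\<lambda>x. gt \<beta>0 \<beta>1 b x $ i $ l)"
      using exhaust_2[of i] exhaust_4[of l]
      by (elim disjE) (simp_all add: gt_def Let_def, (intro continuous_intros cb cG)+)
  qed
qed

theorem proposition2:
  fixes \<beta>0 \<beta>1 :: real and b :: "real \<Rightarrow> real^2^2" and n k m :: nat
  assumes "solves_b \<beta>0 \<beta>1 b"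
    and "n > 0" and "k > 0" and "m > 0"
    and "b (real n) = mat 1"
    and "gamma \<beta>0 \<beta>1 (real n) = 2 * pi * real k / real m"
    and "real k / real m \<notin> \<int>"
  shows "u \<beta>0 \<beta>1 b (real (m * n)) = mat 1 \<and> loop_center \<beta>0 \<beta>1 b (real (m * n)) = 0"
proof -
  note sb = assms(1) and bn = assms(5) and hg = assms(6)
  define \<theta> where "\<theta> = 2 * pi * real k / real m"
  have bper: "b (t + real (j * n)) = b t" for t j
  proof (induction j arbitrary: t)
    case 0 then show ?case by simp
  next
    case (Suc j)
    have "b (t + real (Suc j * n)) = b ((t + real (j * n)) + real n)"
      by (simp add: algebra_simps)
    also have "\<dots> = b (t + real (j * n))" by (rule b_periodic[OF sb bn])
    finally show ?case using Suc by simp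
  qed
  have Gn: "G \<beta>0 \<beta>1 (real n) = \<beta>0 * real n"
    using G_shift[of \<beta>0 \<beta>1 0 n] by (simp add: G_def)
  have th: "\<beta>0 * real n = \<theta>"
    using hg gamma_formula[of "real n" \<beta>0 \<beta>1] Gn by (simp add: \<theta>_def)
  have Gsh: "G \<beta>0 \<beta>1 (t + real (j * n)) = G \<beta>0 \<beta>1 t + real j * \<theta>" for t j
    using G_shift[of \<beta>0 \<beta>1 t "j * n"] th by (simp add: algebra_simps)
  have b0: "b 0 = mat 1" using sb by (simp add: solves_b_def)
  have GT: "G \<beta>0 \<beta>1 (real (m * n)) = 2 * real k * pi"
    using Gsh[of 0 m] assms(4) by (simp add: G_def \<theta>_def)
  have bT: "b (real (m * n)) = mat 1" using bper[of 0 m] b0 by simp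
  have gT: "gamma \<beta>0 \<beta>1 (real (m * n)) = 2 * real k * pi"
    using gamma_formula[of "real (m * n)" \<beta>0 \<beta>1] GT by simp
  have U: "u \<beta>0 \<beta>1 b (real (m * n)) = mat 1"
    unfolding u_def Let_def gT bT
    by (simp add: cos_2npi sin_2npi vec_eq_iff forall_4 mat_def)
  let ?g = "gt \<beta>0 \<beta>1 b"
  have cg: "continuous_on S ?g" for S using cont_gt[OF sb] .
  have cgs: "continuous_on S (?g \<circ> (+) c)" for S c
    by (rule continuous_on_compose[OF _ cg]) (intro continuous_intros)
  have I: "integral {0..real j * real n} ?g = (\<Sum>i<j. integral {0..real n} (?g \<circ> (+) (real i * real n)))" for j
  proof (induction j)
    case 0 then show ?case by simp
  next
    case (Suc j)
    have "integral {0..real (Suc j) * real n} ?g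
        = integral {0..real j * real n} ?g + integral {real j * real n..real (Suc j) * real n} ?g"
    proof -
      have "?g integrable_on {0..real (Suc j) * real n}"
        by (intro integrable_continuous_real cg)
      moreover have "0 \<le> real j * real n" "real j * real n \<le> real (Suc j) * real n"
        by (auto intro: mult_right_mono)
      ultimately show ?thesis using Henstock_Kurzweil_Integration.integral_combine by metis
    qed
    also have "integral {real j * real n..real (Suc j) * real n} ?g
             = integral {0..real n} (?g \<circ> (+) (real j * real n))"
      by (simp add: integral_shift_Icc_real algebra_simps)
    finally show ?case using Suc by (simp add: o_def)
  qed
  have pt: "(\<Sum>i<m. (?g \<circ> (+) (real i * real n)) \<tau>) = 0" for \<tau>
  proof -
    have "(?g \<circ> (+) (real i * real n)) \<tau>
        = cos (G \<beta>0 \<beta>1 \<tau> + real i * \<theta>) *\<^sub>R V1 (b \<tau>) + sin (G \<beta>0 \<beta>1 \<tau> + real i * \<theta>) *\<^sub>R V2 (b \<tau>)" for i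
    proof -
      have e1: "G \<beta>0 \<beta>1 (\<tau> + real i * real n) = G \<beta>0 \<beta>1 \<tau> + real i * \<theta>"
        using Gsh[of \<tau> i] by simp
      have e2: "b (\<tau> + real i * real n) = b \<tau>" using bper[of \<tau> i] by simp
      show ?thesis
        by (simp only: o_def gt_decomp) (simp add: e1 e2 add.commute)
    qed
    then have "(\<Sum>i<m. (?g \<circ> (+) (real i * real n)) \<tau>)
       = (\<Sum>i<m. cos (G \<beta>0 \<beta>1 \<tau> + real i * \<theta>)) *\<^sub>R V1 (b \<tau>)
         + (\<Sum>i<m. sin (G \<beta>0 \<beta>1 \<tau> + real i * \<theta>)) *\<^sub>R V2 (b \<tau>)"
      by (simp add: sum.distrib scaleR_sum_left)
    also have "\<dots> = 0"
      using trig_sum[OF assms(4) assms(7), of "G \<beta>0 \<beta>1 \<tau>"] by (simp add: \<theta>_def)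
    finally show ?thesis .
  qed
  have "integral {0..real (m * n)} (\<lambda>t. vector [u \<beta>0 \<beta>1 b t $ 1, u \<beta>0 \<beta>1 b t $ 2])
      = integral {0..real (m * n)} ?g"
    by (rule integral_cong) (simp add: gt_eq)
  also have "\<dots> = (\<Sum>i<m. integral {0..real n} (?g \<circ> (+) (real i * real n)))"
    using I[of m] by simp
  also have "\<dots> = integral {0..real n} (\<lambda>\<tau>. \<Sum>i<m. (?g \<circ> (+) (real i * real n)) \<tau>)"
    by (rule integral_sum[symmetric]) (auto intro!: integrable_continuous_real cgs)
  also have "\<dots> = 0" using pt[unfolded o_def] by simp
  finally have "loop_center \<beta>0 \<beta>1 b (real (m * n)) = 0"
    by (simp add: loop_center_def)
  with U show ?thesis by simp
qed

end
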